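(* Let $X_n:\Omega\to\mathbb{R}$, $n\in\mathbb{N}$, and $X:\Omega\to\mathbb{R}$ be discrete random variables with $X_n\to X$ in distribution, and assume there is a discrete set $E\subset\mathbb{R}$ (a set without accumulation points in $\mathbb{R}$) containing the ranges of $X$ and of all $X_n$. Let $F_n$ and $F$ be the distribution functions of $X_n$ and $X$. For $(m,n)\in\mathbb{N}^2$ let $X_n^1,\ldots,X_n^m$ be i.i.d. with distribution function $F_n$, and let $F_{m,n}(x)=\frac1m\sum_{i=1}^m\mathbb{1}\{X_n^i\le x\}$ be their empirical distribution function. Then \[ \lim_{n\to\infty}\sup_{x\in\mathbb{R}}|F_{n,n}(x)-F(x)|=0\quad P\text{-a.s.} \] *)

theory Defs
  imports "HOL-Probability.Probability"
begin

definition emp_cdf :: "nat \<Rightarrow> (nat \<Rightarrow> 'a \<Rightarrow> real) \<Rightarrow> real \<Rightarrow> 'a \<Rightarrow> real" where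
  "emp_cdf m Y x w = (1 / real m) * (\<Sum>i=1..m. if Y i w \<le> x then 1 else 0)"

end

theory Submission
  imports Defs
begin

lemma finE:
  fixes E :: "real set"
  assumes "\<And>x. \<not> x islimpt E"
  shows "finite (E \<inter> {a..b})"
  using finite_not_islimpt_in_compact[of "{a..b}" E] assms by (simp add: Int_commute)

lemma countableE:
  fixes E :: "real set"
  assumes "\<And>x. \<not> x islimpt E"
  shows "countable E"
proof -
  have "E = (\<Union>N::nat. E \<inter> {- real N..real N})"
  proof safe
    fix x assume "x \<in> E"
    obtain N :: nat where "\<bar>x\<bar> \<le> real N" using real_arch_simple by blast
    then show "x \<in> (\<Union>N::nat. E \<inter> {- real N..real N})" using \<open>x \<in> E\<close> by (auto intro!: exI[of _ N])
  qed
  moreover have "countable (\<Union>N::nat. E \<inter> {- real N..real N})"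
    using finE[OF assms] by (intro countable_UN) (auto intro: countable_finite)
  ultimately show ?thesis by simp
qed

lemma gapE:
  fixes E :: "real set"
  assumes "\<not> t islimpt E"
  obtains e where "e > 0" "\<And>y. y \<in> E \<Longrightarrow> y \<noteq> t \<Longrightarrow> dist y t \<ge> e"
  using assms unfolding islimpt_approachable by (meson not_less)

lemma cdf_flat:
  assumes "prob_space M" "Z \<in> borel_measurable M" "Z ` space M \<subseteq> E"
    and "a \<le> b" "{a<..b} \<inter> E = {}"
  shows "cdf (distr M borel Z) b = cdf (distr M borel Z) a"
proof (cases "a = b")
  case False
  interpret prob_space M by fact
  interpret D: real_distribution "distr M borel Z" using assms(2) by simp
  have "cdf (distr M borel Z) b - cdf (distr M borel Z) a = measure (distr M borel Z) {a<..b}"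
    using False assms(4) by (intro D.cdf_diff_eq) auto
  also have "\<dots> = measure M (Z -` {a<..b} \<inter> space M)"
    using assms(2) by (simp add: measure_distr)
  also have "Z -` {a<..b} \<inter> space M = {}" using assms(3,5) by auto
  finally show ?thesis by simp
qed simp

lemma cdf_conv_all:
  fixes E :: "real set"
  assumes "prob_space M" "\<And>x. \<not> x islimpt E"
    and "\<And>n. X n \<in> borel_measurable M" "Xl \<in> borel_measurable M"
    and "\<And>n. X n ` space M \<subseteq> E" "Xl ` space M \<subseteq> E"
    and "weak_conv_m (\<lambda>n. distr M borel (X n)) (distr M borel Xl)"
  shows "(\<lambda>n. cdf (distr M borel (X n)) t) \<longlonglongrightarrow> cdf (distr M borel Xl) t"
proof -
  interpret prob_space M by fact
  interpret L: real_distribution "distr M borel Xl" using assms(4) by simp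
  obtain e where e: "e > 0" "\<And>y. y \<in> E \<Longrightarrow> y \<noteq> t \<Longrightarrow> dist y t \<ge> e"
    using gapE assms(2) by blast
  define s where "s = t + e/2"
  have gap: "{t<..s} \<inter> E = {}"
  proof safe
    fix y assume "y \<in> E" "y \<in> {t<..s}"
    then have "dist y t \<ge> e" using e by auto
    then show "y \<in> {}" using \<open>y \<in> {t<..s}\<close> e by (auto simp: s_def dist_real_def)
  qed
  have "s \<in> {t<..s}" using e by (simp add: s_def)
  then have "s \<notin> E" using gap by blast
  have "measure (distr M borel Xl) {s} = measure M (Xl -` {s} \<inter> space M)"
    using assms(4) by (simp add: measure_distr)
  also have "Xl -` {s} \<inter> space M = {}" using \<open>s \<notin> E\<close> assms(6) by auto
  finally have "isCont (cdf (distr M borel Xl)) s" by (simp add: L.isCont_cdf)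
  then have "(\<lambda>n. cdf (distr M borel (X n)) s) \<longlonglongrightarrow> cdf (distr M borel Xl) s"
    using assms(7) by (auto simp: weak_conv_m_def weak_conv_def)
  moreover have "cdf (distr M borel (X n)) s = cdf (distr M borel (X n)) t" for n
    using cdf_flat[OF assms(1,3,5) _ gap] e by (simp add: s_def)
  moreover have "cdf (distr M borel Xl) s = cdf (distr M borel Xl) t"
    using cdf_flat[OF assms(1,4,6) _ gap] e by (simp add: s_def)
  ultimately show ?thesis by simp
qed

lemma emp_meas:
  assumes "\<And>i. i \<in> {1..n} \<Longrightarrow> Z i \<in> borel_measurable M"
  shows "(\<lambda>w. emp_cdf n Z t w) \<in> borel_measurable M"
  unfolding emp_cdf_def
proof (intro borel_measurable_times borel_measurable_const borel_measurable_sum)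
  fix i assume "i \<in> {1..n}"
  note [measurable] = assms[OF this]
  show "(\<lambda>w. if Z i w \<le> t then 1 else 0::real) \<in> borel_measurable M" by measurable
qed

lemma row_hoeffding:
  assumes "prob_space M" "\<And>i. i \<in> {1..n} \<Longrightarrow> Z i \<in> borel_measurable M"
    and "prob_space.indep_vars M (\<lambda>_. borel) Z {1..n}"
    and "\<And>i. i \<in> {1..n} \<Longrightarrow> cdf (distr M borel (Z i)) t = p"
    and "n > 0" "\<epsilon> > 0"
  shows "measure M {w\<in>space M. \<epsilon> \<le> \<bar>emp_cdf n Z t w - p\<bar>} \<le> 2 * exp (-2 * real n * \<epsilon>\<^sup>2)"
proof -
  interpret prob_space M by fact
  define V where "V = (\<lambda>i w. if Z i w \<le> t then 1 else 0::real)"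
  have Vm: "V i \<in> borel_measurable M" if "i \<in> {1..n}" for i
  proof -
    note [measurable] = assms(2)[OF that]
    show ?thesis unfolding V_def by measurable
  qed
  have EV: "expectation (V i) = p" if i: "i \<in> {1..n}" for i
  proof -
    note [measurable] = assms(2)[OF that]
    have "expectation (V i) = expectation (indicator {w\<in>space M. Z i w \<le> t})"
      by (intro Bochner_Integration.integral_cong) (auto simp: V_def indicator_def)
    also have "\<dots> = prob {w\<in>space M. Z i w \<le> t}" by simp
    also have "{w\<in>space M. Z i w \<le> t} = Z i -` {..t} \<inter> space M" by auto
    also have "prob \<dots> = measure (distr M borel (Z i)) {..t}"
      by (simp add: measure_distr)
    also have "\<dots> = p" using assms(4)[OF i] by (simp add: cdf_def)
    finally show ?thesis .
  qed
  have indV: "indep_vars (\<lambda>_. borel) V {1..n}"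
    unfolding V_def
    by (rule indep_vars_compose2[where X=Z and Y="\<lambda>i y. if y \<le> t then 1 else 0::real", OF assms(3)]) measurable
  interpret H: Hoeffding_ineq M "{1..n}" V "\<lambda>_. 0" "\<lambda>_. 1" "real n * p"
  proof unfold_locales
    show "AE x in M. V i x \<in> {0..1}" if "i \<in> {1..n}" for i by (auto simp: V_def)
    show "real n * p \<equiv> \<Sum>i\<in>{1..n}. expectation (V i)" using EV by simp
  qed (fact indV | simp)+
  have "prob {w\<in>space M. n * \<epsilon> \<le> \<bar>(\<Sum>i\<in>{1..n}. V i w) - real n * p\<bar>} \<le> 2 * exp (-2 * (n*\<epsilon>)\<^sup>2 / (\<Sum>i\<in>{1..n}. (1 - 0)\<^sup>2))"
    using assms(5,6) by (intro H.Hoeffding_ineq_abs_ge) auto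
  also have "-2 * (n*\<epsilon>)\<^sup>2 / (\<Sum>i\<in>{1..n}. (1 - 0::real)\<^sup>2) = -2 * real n * \<epsilon>\<^sup>2"
    using assms(5) by (simp add: power2_eq_square)
  also have "{w\<in>space M. n * \<epsilon> \<le> \<bar>(\<Sum>i\<in>{1..n}. V i w) - real n * p\<bar>} = {w\<in>space M. \<epsilon> \<le> \<bar>emp_cdf n Z t w - p\<bar>}"
  proof (intro Collect_cong conj_cong refl)
    fix w
    have "emp_cdf n Z t w - p = ((\<Sum>i\<in>{1..n}. V i w) - real n * p) / n"
      using assms(5) by (simp add: emp_cdf_def V_def field_simps)
    then have "\<bar>emp_cdf n Z t w - p\<bar> = \<bar>(\<Sum>i\<in>{1..n}. V i w) - real n * p\<bar> / n"
      by simp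
    then have "\<bar>(\<Sum>i\<in>{1..n}. V i w) - real n * p\<bar> = real n * \<bar>emp_cdf n Z t w - p\<bar>"
      using assms(5) by (simp add: field_simps)
    then show "(n * \<epsilon> \<le> \<bar>(\<Sum>i\<in>{1..n}. V i w) - real n * p\<bar>) = (\<epsilon> \<le> \<bar>emp_cdf n Z t w - p\<bar>)"
      using assms(5) by (simp only:) (simp add: mult_le_cancel_left_pos)
  qed
  finally show ?thesis .
qed

lemma pointwise_ae:
  assumes "prob_space M" "\<And>n i. i \<in> {1..n} \<Longrightarrow> Z n i \<in> borel_measurable M"
    and "\<And>n. prob_space.indep_vars M (\<lambda>_. borel) (Z n) {1..n}"
    and "\<And>n i. i \<in> {1..n} \<Longrightarrow> cdf (distr M borel (Z n i)) t = p n"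
  shows "AE w in M. (\<lambda>n. emp_cdf n (Z n) t w - p n) \<longlonglongrightarrow> 0"
proof -
  interpret prob_space M by fact
  have ev: "AE w in M. eventually (\<lambda>n. \<bar>emp_cdf n (Z n) t w - p n\<bar> < \<epsilon>) sequentially"
    if "\<epsilon> > 0" for \<epsilon>
  proof -
    define A where "A n = {w\<in>space M. \<epsilon> \<le> \<bar>emp_cdf n (Z n) t w - p n\<bar>}" for n
    have Am: "A n \<in> sets M" for n
    proof -
      have [measurable]: "(\<lambda>w. emp_cdf n (Z n) t w) \<in> borel_measurable M"
        by (rule emp_meas) (rule assms(2))
      show ?thesis unfolding A_def by measurable
    qed
    define q where "q = exp (-2 * \<epsilon>\<^sup>2)"
    have q: "0 \<le> q" "q < 1" using that by (auto simp: q_def)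
    have bnd: "norm (measure M (A n)) \<le> 2 * q ^ n" for n
    proof (cases "n = 0")
      case True
      have "measure M (A n) \<le> 1" "0 \<le> measure M (A n)" by (rule prob_le_1) (rule measure_nonneg)
      then show ?thesis using True by (simp only: real_norm_def power_0)
    next
      case False
      have "measure M (A n) \<le> 2 * exp (-2 * real n * \<epsilon>\<^sup>2)"
        unfolding A_def using False that
        by (intro row_hoeffding[OF assms(1)] assms) auto
      also have "exp (-2 * real n * \<epsilon>\<^sup>2) = q ^ n"
        unfolding q_def by (subst exp_of_nat_mult[symmetric]) (simp add: algebra_simps)
      finally show ?thesis by simp
    qed
    have "summable (\<lambda>n. measure M (A n))"
      by (rule summable_comparison_test'[OF _ bnd]) (use q in \<open>auto intro!: summable_mult summable_geometric\<close>)
    then have "AE w in M. eventually (\<lambda>n. w \<in> space M - A n) sequentially"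
      using Am by (intro borel_cantelli_AE1) (auto simp: emeasure_eq_measure)
    then show ?thesis
      by (rule eventually_mono) (auto elim!: eventually_mono simp: A_def)
  qed
  have "AE w in M. \<forall>k::nat. eventually (\<lambda>n. \<bar>emp_cdf n (Z n) t w - p n\<bar> < 1 / Suc k) sequentially"
    unfolding AE_all_countable by (intro allI ev) auto
  then show ?thesis
  proof (rule eventually_mono)
    fix w assume H: "\<forall>k::nat. eventually (\<lambda>n. \<bar>emp_cdf n (Z n) t w - p n\<bar> < 1 / Suc k) sequentially"
    show "(\<lambda>n. emp_cdf n (Z n) t w - p n) \<longlonglongrightarrow> 0"
    proof (rule tendstoI)
      fix r :: real assume "r > 0"
      then obtain k :: nat where k: "1 / of_nat (Suc k) < r" by (rule nat_approx_posE)
      show "eventually (\<lambda>n. dist (emp_cdf n (Z n) t w - p n) 0 < r) sequentially"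
        using H[rule_format, of k] by (rule eventually_mono) (use k in auto)
    qed
  qed
qed

lemma in_E_ae:
  fixes E :: "real set"
  assumes "prob_space M" "\<And>x. \<not> x islimpt E"
    and "Z \<in> borel_measurable M" "Xn \<in> borel_measurable M" "Xn ` space M \<subseteq> E"
    and "cdf (distr M borel Z) = cdf (distr M borel Xn)"
  shows "AE w in M. Z w \<in> E"
proof -
  interpret prob_space M by fact
  interpret D: real_distribution "distr M borel Z" using assms(3) by simp
  define C where "C = {(a,b). a \<in> \<rat> \<and> b \<in> \<rat> \<and> a < b \<and> {a<..b} \<inter> E = {}}"
  have "countable C"
    by (rule countable_subset[of _ "\<rat> \<times> \<rat>"]) (auto simp: C_def countable_rat)
  have "AE w in M. Z w \<notin> {fst c<..snd c}" if "c \<in> C" for c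
  proof -
    obtain a b where c: "c = (a,b)" "a < b" "{a<..b} \<inter> E = {}" using \<open>c \<in> C\<close> by (auto simp: C_def)
    have "measure M (Z -` {a<..b} \<inter> space M) = measure (distr M borel Z) {a<..b}"
      using assms(3) by (simp add: measure_distr)
    also have "\<dots> = cdf (distr M borel Z) b - cdf (distr M borel Z) a"
      using c by (simp add: D.cdf_diff_eq)
    also have "\<dots> = 0" using assms(6) cdf_flat[OF assms(1,4,5) _ c(3)] c(2) by simp
    finally have "Z -` {a<..b} \<inter> space M \<in> null_sets M"
      using assms(3) by (auto simp: null_sets_def emeasure_eq_measure)
    then show ?thesis using c by (intro AE_I'[of "Z -` {a<..b} \<inter> space M"]) auto
  qed
  then have "AE w in M. \<forall>c\<in>C. Z w \<notin> {fst c<..snd c}"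
    using \<open>countable C\<close> by (simp add: AE_ball_countable)
  then show ?thesis
  proof (rule eventually_mono)
    fix w assume H: "\<forall>c\<in>C. Z w \<notin> {fst c<..snd c}"
    show "Z w \<in> E"
    proof (rule ccontr)
      assume nE: "Z w \<notin> E"
      obtain e where e: "e > 0" "\<And>y. y \<in> E \<Longrightarrow> y \<noteq> Z w \<Longrightarrow> dist y (Z w) \<ge> e"
        using gapE assms(2) by blast
      obtain a where a: "a \<in> \<rat>" "Z w - e < a" "a < Z w" using Rats_dense_in_real[of "Z w - e" "Z w"] e by auto
      obtain b where b: "b \<in> \<rat>" "Z w < b" "b < Z w + e" using Rats_dense_in_real[of "Z w" "Z w + e"] e by auto
      have "{a<..b} \<inter> E = {}"
      proof safe
        fix y assume "y \<in> {a<..b}" "y \<in> E"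
        then have "dist y (Z w) \<ge> e" using e nE by metis
        then show "y \<in> {}" using \<open>y \<in> {a<..b}\<close> a b by (auto simp: dist_real_def)
      qed
      then have "(a,b) \<in> C" using a b by (auto simp: C_def)
      then show False using H a b by auto
    qed
  qed
qed

lemma det_uniform:
  fixes E :: "real set" and F :: "real \<Rightarrow> real" and Y :: "nat \<Rightarrow> nat \<Rightarrow> nat \<Rightarrow> 'a \<Rightarrow> real"
  assumes lim: "\<And>x. \<not> x islimpt E"
    and YE: "\<And>n i. i \<in> {1..n} \<Longrightarrow> Y n n i w \<in> E"
    and cE: "\<And>t. t \<in> E \<Longrightarrow> (\<lambda>n. emp_cdf n (Y n n) t w) \<longlonglongrightarrow> F t"
    and cP: "\<And>k::nat. (\<lambda>n. emp_cdf n (Y n n) (real k) w) \<longlonglongrightarrow> F (real k)"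
    and cN: "\<And>k::nat. (\<lambda>n. emp_cdf n (Y n n) (- real k) w) \<longlonglongrightarrow> F (- real k)"
    and Fmono: "\<And>x y. x \<le> y \<Longrightarrow> F x \<le> F y"
    and F01: "\<And>x. 0 \<le> F x \<and> F x \<le> 1"
    and Fbot: "(\<lambda>k. F (- real k)) \<longlonglongrightarrow> 0"
    and Ftop: "(\<lambda>k. F (real k)) \<longlonglongrightarrow> 1"
    and Fflat: "\<And>a b. a \<le> b \<Longrightarrow> {a<..b} \<inter> E = {} \<Longrightarrow> F b = F a"
  shows "(\<lambda>n. SUP x::real. \<bar>emp_cdf n (Y n n) x w - F x\<bar>) \<longlonglongrightarrow> 0"
proof -
  define G where "G n x = emp_cdf n (Y n n) x w" for n x
  have Gmono: "G n x \<le> G n y" if "x \<le> y" for n x y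
    unfolding G_def emp_cdf_def using that
    by (intro mult_left_mono sum_mono) auto
  have G0: "0 \<le> G n x" for n x
    unfolding G_def emp_cdf_def by (intro mult_nonneg_nonneg sum_nonneg) auto
  have G1: "G n x \<le> 1" for n x
  proof (cases "n = 0")
    case False
    have "(\<Sum>i=1..n. if Y n n i w \<le> x then 1 else 0::real) \<le> (\<Sum>i=1..n. 1)"
      by (intro sum_mono) auto
    then have "(\<Sum>i=1..n. if Y n n i w \<le> x then 1 else 0::real) \<le> real n" by simp
    then show ?thesis unfolding G_def emp_cdf_def using False by (simp add: field_simps)
  qed (simp add: G_def emp_cdf_def)
  have Gflat: "G n b = G n a" if "a \<le> b" "{a<..b} \<inter> E = {}" for n a b
  proof -
    have "(Y n n i w \<le> b) = (Y n n i w \<le> a)" if "i \<in> {1..n}" for i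
      using YE[OF that] \<open>{a<..b} \<inter> E = {}\<close> \<open>a \<le> b\<close>
      by (metis disjoint_iff greaterThanAtMost_iff linorder_not_le order_trans)
    then show ?thesis unfolding G_def emp_cdf_def by (intro arg_cong2[where f="(*)"] refl sum.cong) auto
  qed
  show ?thesis
  proof (rule tendstoI)
    fix \<epsilon> :: real assume "\<epsilon> > 0"
    define \<delta> where "\<delta> = \<epsilon> / 4"
    have "\<delta> > 0" using \<open>\<epsilon> > 0\<close> by (simp add: \<delta>_def)
    have "eventually (\<lambda>k. F (- real k) < \<delta> \<and> F (real k) > 1 - \<delta>) sequentially"
    proof (rule eventually_conj)
      show "eventually (\<lambda>k. F (- real k) < \<delta>) sequentially"
        using order_tendstoD(2)[OF Fbot \<open>\<delta> > 0\<close>] .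
      show "eventually (\<lambda>k. F (real k) > 1 - \<delta>) sequentially"
        using order_tendstoD(1)[OF Ftop] \<open>\<delta> > 0\<close> by simp
    qed
    then obtain K :: nat where K: "F (- real K) < \<delta>" "F (real K) > 1 - \<delta>"
      by (auto simp: eventually_sequentially)
    define T where "T = (E \<inter> {- real K..real K}) \<union> {- real K, real K}"
    have "finite T" unfolding T_def using finE[OF lim] by simp
    have conv: "(\<lambda>n. G n t) \<longlonglongrightarrow> F t" if "t \<in> T" for t
      using that cE cP cN unfolding T_def G_def by auto
    have "eventually (\<lambda>n. \<forall>t\<in>T. \<bar>G n t - F t\<bar> < \<delta>) sequentially"
    proof (rule eventually_ball_finite[OF \<open>finite T\<close>], rule ballI)
      fix t assume "t \<in> T"
      show "eventually (\<lambda>n. \<bar>G n t - F t\<bar> < \<delta>) sequentially"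
        using tendstoD[OF conv[OF \<open>t \<in> T\<close>] \<open>\<delta> > 0\<close>] by (simp add: dist_real_def)
    qed
    then show "eventually (\<lambda>n. dist (SUP x::real. \<bar>emp_cdf n (Y n n) x w - F x\<bar>) 0 < \<epsilon>) sequentially"
    proof (rule eventually_mono)
      fix n assume Hn: "\<forall>t\<in>T. \<bar>G n t - F t\<bar> < \<delta>"
      have mK: "- real K \<in> T" and pK: "real K \<in> T" by (auto simp: T_def)
      have bound: "\<bar>G n x - F x\<bar> \<le> 2 * \<delta>" for x
      proof -
        consider "x < - real K" | "x \<ge> real K" | "- real K \<le> x" "x < real K" by linarith
        then show ?thesis
        proof cases
          case 1
          have "G n x \<le> G n (- real K)" "F x \<le> F (- real K)" using 1 Gmono Fmono by auto
          moreover have "\<bar>G n (- real K) - F (- real K)\<bar> < \<delta>" using Hn mK by auto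
          ultimately show ?thesis using G0[of n x] F01[of x] K by auto
        next
          case 2
          have "G n x \<ge> G n (real K)" "F x \<ge> F (real K)" using 2 Gmono Fmono by auto
          moreover have "\<bar>G n (real K) - F (real K)\<bar> < \<delta>" using Hn pK by auto
          ultimately show ?thesis using G1[of n x] F01[of x] K by auto
        next
          case 3
          define S where "S = {t\<in>T. t \<le> x}"
          have "finite S" "S \<noteq> {}" using \<open>finite T\<close> mK 3 by (auto simp: S_def)
          define e where "e = Max S"
          have "e \<in> S" using Max_in[OF \<open>finite S\<close> \<open>S \<noteq> {}\<close>] by (simp add: e_def)
          then have eT: "e \<in> T" "e \<le> x" by (auto simp: S_def)
          have "- real K \<le> e" using Max_ge[OF \<open>finite S\<close>, of "- real K"] mK 3 by (auto simp: S_def e_def)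
          have gap: "{e<..x} \<inter> E = {}"
          proof safe
            fix p assume p: "p \<in> {e<..x}" "p \<in> E"
            then have "p \<in> S" using \<open>- real K \<le> e\<close> 3 by (auto simp: S_def T_def)
            then have "p \<le> e" using Max_ge[OF \<open>finite S\<close>] by (simp add: e_def)
            then show "p \<in> {}" using p by auto
          qed
          have "G n x = G n e" "F x = F e" using Gflat[OF eT(2) gap] Fflat[OF eT(2) gap] by auto
          then show ?thesis using Hn eT \<open>\<delta> > 0\<close> by auto
        qed
      qed
      have le: "(SUP x::real. \<bar>emp_cdf n (Y n n) x w - F x\<bar>) \<le> 2 * \<delta>"
        using bound by (intro cSUP_least) (auto simp: G_def)
      have bdd: "bdd_above (range (\<lambda>x::real. \<bar>emp_cdf n (Y n n) x w - F x\<bar>))"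
        using bound by (intro bdd_aboveI2) (auto simp: G_def)
      have ge: "0 \<le> (SUP x::real. \<bar>emp_cdf n (Y n n) x w - F x\<bar>)"
        using cSUP_upper[OF UNIV_I bdd, of 0] by (meson abs_ge_zero order_trans)
      show "dist (SUP x::real. \<bar>emp_cdf n (Y n n) x w - F x\<bar>) 0 < \<epsilon>"
        using le ge \<open>\<epsilon> > 0\<close> by (simp add: \<delta>_def dist_real_def)
    qed
  qed
qed

theorem mainTheorem5:
  fixes M :: "'a measure"
    and X :: "nat \<Rightarrow> 'a \<Rightarrow> real" and Xl :: "'a \<Rightarrow> real"
    and E :: "real set"
    and Y :: "nat \<Rightarrow> nat \<Rightarrow> nat \<Rightarrow> 'a \<Rightarrow> real"
  assumes "prob_space M"
    and "\<And>n. X n \<in> borel_measurable M"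
    and "Xl \<in> borel_measurable M"
    and "\<And>x. \<not> x islimpt E"
    and "\<And>n. X n ` space M \<subseteq> E"
    and "Xl ` space M \<subseteq> E"
    and "weak_conv_m (\<lambda>n. distr M borel (X n)) (distr M borel Xl)"
    and "\<And>m n i. i \<in> {1..m} \<Longrightarrow> Y m n i \<in> borel_measurable M"
    and "\<And>m n. prob_space.indep_vars M (\<lambda>_. borel) (Y m n) {1..m}"
    and "\<And>m n i. i \<in> {1..m} \<Longrightarrow>
           cdf (distr M borel (Y m n i)) = cdf (distr M borel (X n))"
  shows "AE w in M.
           (\<lambda>n. SUP x::real. \<bar>emp_cdf n (Y n n) x w - cdf (distr M borel Xl) x\<bar>)
             \<longlonglongrightarrow> 0"
proof -
  interpret prob_space M by fact
  interpret L: real_distribution "distr M borel Xl" using assms(3) by simp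
  define F where "F = cdf (distr M borel Xl)"
  have pt: "AE w in M. (\<lambda>n. emp_cdf n (Y n n) t w) \<longlonglongrightarrow> F t" for t
  proof -
    have "AE w in M. (\<lambda>n. emp_cdf n (Y n n) t w - cdf (distr M borel (X n)) t) \<longlonglongrightarrow> 0"
      by (rule pointwise_ae[OF assms(1)]) (use assms(8,9,10) in auto)
    moreover have c: "(\<lambda>n. cdf (distr M borel (X n)) t) \<longlonglongrightarrow> F t"
      unfolding F_def by (rule cdf_conv_all[OF assms(1,4,2,3,5,6,7)])
    ultimately show ?thesis
    proof (elim eventually_mono)
      fix w assume "(\<lambda>n. emp_cdf n (Y n n) t w - cdf (distr M borel (X n)) t) \<longlonglongrightarrow> 0"
      from tendsto_add[OF this c] show "(\<lambda>n. emp_cdf n (Y n n) t w) \<longlonglongrightarrow> F t" by simp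
    qed

  qed
  have YE: "AE w in M. \<forall>n. \<forall>i\<in>{1..n}. Y n n i w \<in> E"
    unfolding AE_all_countable
  proof
    fix n
    show "AE w in M. \<forall>i\<in>{1..n}. Y n n i w \<in> E"
    proof (rule AE_ball_countable')
      fix i assume i: "i \<in> {1..n}"
      show "AE w in M. Y n n i w \<in> E"
        by (rule in_E_ae[OF assms(1,4) assms(8)[OF i] assms(2) assms(5) assms(10)[OF i]])
    qed simp
  qed
  have cEa: "AE w in M. \<forall>t\<in>E. (\<lambda>n. emp_cdf n (Y n n) t w) \<longlonglongrightarrow> F t"
    using countableE[OF assms(4)] pt by (simp add: AE_ball_countable)
  have cPa: "AE w in M. \<forall>k::nat. (\<lambda>n. emp_cdf n (Y n n) (real k) w) \<longlonglongrightarrow> F (real k)"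
    using pt by (simp add: AE_all_countable)
  have cNa: "AE w in M. \<forall>k::nat. (\<lambda>n. emp_cdf n (Y n n) (- real k) w) \<longlonglongrightarrow> F (- real k)"
    using pt by (simp add: AE_all_countable)
  have Fflat: "F b = F a" if "a \<le> b" "{a<..b} \<inter> E = {}" for a b
    unfolding F_def by (rule cdf_flat[OF assms(1,3,6) that])
  show ?thesis
    using YE cEa cPa cNa
  proof eventually_elim
    case (elim w)
    show ?case
      unfolding F_def[symmetric]
    proof (rule det_uniform[OF assms(4)])
      show "Y n n i w \<in> E" if "i \<in> {1..n}" for n i using elim(1) that by auto
    qed (use elim L.cdf_nondecreasing L.cdf_nonneg L.cdf_bounded_prob L.cdf_lim_neg_infty
         L.cdf_lim_infty_prob Fflat in \<open>auto simp: F_def\<close>)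
  qed
qed

end
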